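(* Let $k\ge 3$ and let $D$ be a digraph on $n$ vertices with $\delta^0(D)\ge\lceil (n+k)/2\rceil-1$. Let $S=(s_1,\dots,s_k)$ be a sequence of distinct vertices of $D$, let $C$ be a longest $S$-cycle in $D$, suppose $C$ is not Hamiltonian, and let $H$ be the subdigraph of $D$ induced by $V(D)\setminus V(C)$. Let $F$ be the set of vertices of $C$ which receive an edge from some vertex of $H$, and $T$ the set of vertices of $C$ which send an edge to some vertex of $H$. Suppose $H$ contains a vertex $v$ with $d^-_H(v)+d^+_H(v)\le |H|+k-1$, and suppose $x_1,x_2\in T$ and $y_1,y_2\in F$ are distinct vertices on $C$. Then $x_1v, vy_1\in E(D)$ or $x_2v, vy_2\in E(D)$ (or both).
   Context: Digraphs have no loops and at most one edge in each direction between any two vertices; paths and cycles are directed. $\delta^0(D)=\min\{\delta^+(D),\delta^-(D)\}$. An $S$-cycle is a directed cycle in $D$ encountering $s_1,\dots,s_k$ in this order. $d^\pm_H(v)$ denotes the out/indegree of $v$ within $H$. *)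

theory Defs
  imports Complex_Main "HOL-Library.Sublist"
begin

text \<open>A digraph: finite vertex set V and edge relation E (no loops, edges inside V).
  At most one edge in each direction is automatic for a relation.\<close>
definition digraph :: "'a set \<Rightarrow> ('a \<Rightarrow> 'a \<Rightarrow> bool) \<Rightarrow> bool" where
  "digraph V E \<longleftrightarrow> finite V \<and> (\<forall>u w. E u w \<longrightarrow> u \<in> V \<and> w \<in> V) \<and> (\<forall>u. \<not> E u u)"

definition outdeg :: "'a set \<Rightarrow> ('a \<Rightarrow> 'a \<Rightarrow> bool) \<Rightarrow> 'a \<Rightarrow> nat" where
  "outdeg V E v = card {w \<in> V. E v w}"

definition indeg :: "'a set \<Rightarrow> ('a \<Rightarrow> 'a \<Rightarrow> bool) \<Rightarrow> 'a \<Rightarrow> nat" where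
  "indeg V E v = card {w \<in> V. E w v}"

definition min_semideg :: "'a set \<Rightarrow> ('a \<Rightarrow> 'a \<Rightarrow> bool) \<Rightarrow> nat" where
  "min_semideg V E = Min ((\<lambda>v. min (outdeg V E v) (indeg V E v)) ` V)"

definition dcycle :: "'a set \<Rightarrow> ('a \<Rightarrow> 'a \<Rightarrow> bool) \<Rightarrow> 'a list \<Rightarrow> bool" where
  "dcycle V E C \<longleftrightarrow> length C \<ge> 2 \<and> distinct C \<and> set C \<subseteq> V \<and>
     (\<forall>i < length C. E (C ! i) (C ! ((i + 1) mod length C)))"

text \<open>An S-cycle: a directed cycle encountering s_1,...,s_k in this (cyclic) order.\<close>
definition S_cycle :: "'a set \<Rightarrow> ('a \<Rightarrow> 'a \<Rightarrow> bool) \<Rightarrow> 'a list \<Rightarrow> 'a list \<Rightarrow> bool" where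
  "S_cycle V E S C \<longleftrightarrow> dcycle V E C \<and> (\<exists>r. subseq S (rotate r C))"

end

theory Submission
  imports Defs
begin


lemma dcycle_iff:
  "dcycle V E L \<longleftrightarrow> 2 \<le> length L \<and> distinct L \<and> set L \<subseteq> V \<and> successively E L \<and> E (last L) (hd L)"
proof
  assume a: "dcycle V E L"
  then have L: "2 \<le> length L" "distinct L" "set L \<subseteq> V"
    and e: "\<And>i. i < length L \<Longrightarrow> E (L ! i) (L ! ((i + 1) mod length L))"
    unfolding dcycle_def by auto
  have "successively E L"
    unfolding successively_conv_nth
  proof (intro allI impI)
    fix i assume "Suc i < length L"
    then show "E (L ! i) (L ! Suc i)" using e[of i] by simp
  qed
  moreover have "E (last L) (hd L)"
  proof -
    have "length L - 1 < length L" using L by simp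
    have "Suc (length L - 1) = length L" using L by simp
    with e[OF \<open>length L - 1 < length L\<close>] have "E (L ! (length L - 1)) (L ! 0)" using L by simp
    moreover have "L \<noteq> []" using L by auto
    ultimately show ?thesis by (simp add: last_conv_nth hd_conv_nth)
  qed
  ultimately show "2 \<le> length L \<and> distinct L \<and> set L \<subseteq> V \<and> successively E L \<and> E (last L) (hd L)"
    using L by simp
next
  assume a: "2 \<le> length L \<and> distinct L \<and> set L \<subseteq> V \<and> successively E L \<and> E (last L) (hd L)"
  show "dcycle V E L"
    unfolding dcycle_def
  proof (intro conjI allI impI)
    fix i assume i: "i < length L"
    show "E (L ! i) (L ! ((i + 1) mod length L))"
    proof (cases "Suc i < length L")
      case True
      then show ?thesis using a successively_nth[of E L i] by simp
    next
      case False
      then have "i = length L - 1" using i by simp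
      then have "i + 1 = length L" using i by simp
      then have "(i + 1) mod length L = 0" by simp
      moreover have "L \<noteq> []" using i by auto
      ultimately show ?thesis using a \<open>i = length L - 1\<close> by (simp add: last_conv_nth hd_conv_nth)
    qed
  qed (use a in auto)
qed

lemma dcycle_rotate:
  assumes "dcycle V E C" shows "dcycle V E (rotate r C)"
  unfolding dcycle_def
proof (intro conjI allI impI)
  have C: "2 \<le> length C" "distinct C" "set C \<subseteq> V"
    and e: "\<And>i. i < length C \<Longrightarrow> E (C ! i) (C ! ((i + 1) mod length C))"
    using assms unfolding dcycle_def by auto
  show "2 \<le> length (rotate r C)" "distinct (rotate r C)" "set (rotate r C) \<subseteq> V" using C by auto
  fix i assume i: "i < length (rotate r C)"
  let ?m = "length C"
  have i': "i < ?m" using i by simp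
  have "?m > 0" using C by linarith
  then have "(i + 1) mod ?m < ?m" by (intro mod_less_divisor)
  then have "rotate r C ! ((i + 1) mod length (rotate r C)) = C ! ((r + (i + 1) mod ?m) mod ?m)"
    by (simp add: nth_rotate)
  also have "(r + (i + 1) mod ?m) mod ?m = ((r + i) mod ?m + 1) mod ?m"
    by (metis add.assoc mod_add_left_eq mod_add_right_eq)
  finally have 1: "rotate r C ! ((i + 1) mod length (rotate r C)) = C ! (((r + i) mod ?m + 1) mod ?m)" .
  have 2: "rotate r C ! i = C ! ((r + i) mod ?m)" using i' by (simp add: nth_rotate)
  have "(r + i) mod ?m < ?m" using \<open>?m > 0\<close> by (intro mod_less_divisor)
  from e[OF this] show "E (rotate r C ! i) (rotate r C ! ((i + 1) mod length (rotate r C)))"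
    using 1 2 by simp
qed

lemma dcycle_insert:
  assumes cyc: "dcycle V E C" and j: "1 \<le> j" "j \<le> length C"
    and P: "P \<noteq> []" "distinct P" "set P \<subseteq> V - set C" "successively E P"
    and e1: "E (C ! (j - 1)) (hd P)" and e2: "E (last P) (C ! (j mod length C))"
  shows "dcycle V E (take j C @ P @ drop j C)"
proof -
  have C: "2 \<le> length C" "distinct C" "set C \<subseteq> V" "successively E C" "E (last C) (hd C)"
    using cyc unfolding dcycle_iff by auto
  have sC: "successively E (take j C) \<and> successively E (drop j C)"
    using C(4) successively_append_iff[of E "take j C" "drop j C"] by simp
  have tne: "take j C \<noteq> []" using j C by auto
  have lt: "last (take j C) = C ! (j - 1)" using j C tne
    by (simp add: last_conv_nth)
  have ht: "hd (take j C) = hd C" using tne by (metis append_take_drop_id hd_append2)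
  show ?thesis
  proof (cases "j = length C")
    case True
    then have "take j C @ P @ drop j C = C @ P" by simp
    moreover have "j mod length C = 0" using True by simp
    moreover have "hd C = C ! 0" using C by (intro hd_conv_nth) auto
    moreover have "hd (C @ P) = hd C" using C by (cases C) auto
    ultimately show ?thesis unfolding dcycle_iff using C P e1 e2 lt True
      by (auto simp: successively_append_iff)
  next
    case False
    then have jl: "j < length C" using j by simp
    have hd: "hd (drop j C) = C ! j" using jl by (simp add: hd_drop_conv_nth)
    have dne: "drop j C \<noteq> []" using jl by simp
    have ld: "last (drop j C) = last C" using dne by (metis append_take_drop_id last_appendR)
    have dist: "distinct (take j C @ P @ drop j C)"
    proof -
      have "distinct (take j C @ drop j C)" using C by simp
      then have "distinct (take j C)" "distinct (drop j C)" "set (take j C) \<inter> set (drop j C) = {}"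
        by (simp_all only: distinct_append)
      moreover have "set P \<inter> set (take j C) = {}" "set P \<inter> set (drop j C) = {}"
        using P(3) set_take_subset set_drop_subset by fastforce+
      ultimately show ?thesis using P by auto
    qed
    have "set (take j C @ P @ drop j C) \<subseteq> V" using C P set_take_subset set_drop_subset by fastforce
    moreover have "2 \<le> length (take j C @ P @ drop j C)" using C by simp
    moreover have "successively E (take j C @ P @ drop j C)"
      using sC P e1 e2 lt hd jl tne dne by (auto simp: successively_append_iff)
    moreover have "E (last (take j C @ P @ drop j C)) (hd (take j C @ P @ drop j C))"
      using ld ht tne dne C by simp
    ultimately show ?thesis unfolding dcycle_iff using dist by blast
  qed
qed




locale lsetup =
  fixes V :: "'a set" and E :: "'a \<Rightarrow> 'a \<Rightarrow> bool" and S C :: "'a list"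
  assumes D: "digraph V E" and cyc: "dcycle V E C" and sub: "subseq S C"
    and longest: "\<forall>C'. S_cycle V E S C' \<longrightarrow> length C' \<le> length C"
begin

abbreviation "H \<equiv> V - set C"
abbreviation "m \<equiv> length C"
definition "Hr a b \<longleftrightarrow> E a b \<and> a \<in> H \<and> b \<in> H"

lemma C_facts: "2 \<le> m" "distinct C" "set C \<subseteq> V" "m > 0"
  using cyc unfolding dcycle_def by auto

lemma finV: "finite V" and noloop: "\<not> E u u" and EV: "E a b \<Longrightarrow> a \<in> V \<and> b \<in> V"
  using D unfolding digraph_def by auto

lemma no_insert:
  assumes i: "i < m" and P: "P \<noteq> []" "distinct P" "set P \<subseteq> H" "successively E P"
    and e1: "E (C ! i) (hd P)" and e2: "E (last P) (C ! ((i + 1) mod m))"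
  shows False
proof -
  let ?C' = "take (i + 1) C @ P @ drop (i + 1) C"
  have "dcycle V E ?C'"
    using dcycle_insert[OF cyc, of "i + 1" P] i P e1 e2 by simp
  moreover have "subseq C ?C'"
  proof -
    have "subseq (drop (i + 1) C) (P @ drop (i + 1) C)" by (simp add: subseq_drop_many)
    then have "subseq (take (i + 1) C @ drop (i + 1) C) ?C'" by (simp only: subseq_append')
    then show ?thesis by simp
  qed
  then have "subseq S ?C'" using sub subseq_order.order_trans by blast
  ultimately have "S_cycle V E S ?C'" unfolding S_cycle_def by (metis rotate0 id_apply)
  then have "length ?C' \<le> m" using longest by blast
  moreover have "length ?C' = m + length P" using i by simp
  moreover have "length P > 0" using P by simp
  ultimately show False by linarith
qed

lemma path_of_rtranclp:
  assumes "Hr\<^sup>*\<^sup>* a b" "a \<in> H"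
  shows "\<exists>P. P \<noteq> [] \<and> hd P = a \<and> last P = b \<and> distinct P \<and> set P \<subseteq> H \<and> successively E P"
  using assms(1)
proof (induction rule: rtranclp_induct)
  case base
  then show ?case using assms(2) by (intro exI[of _ "[a]"]) auto
next
  case (step b c)
  then obtain P where P: "P \<noteq> []" "hd P = a" "last P = b" "distinct P" "set P \<subseteq> H" "successively E P"
    by blast
  have bc: "E b c" "c \<in> H" using step(2) unfolding Hr_def by auto
  show ?case
  proof (cases "c \<in> set P")
    case True
    then obtain xs ys where xs: "P = xs @ c # ys" by (meson split_list)
    have "P = (xs @ [c]) @ ys" using xs by simp
    then have "successively E (xs @ [c])" using P(6) successively_append_iff by metis
    moreover have "hd (xs @ [c]) = a" using P(2) xs by (cases xs) auto
    moreover have "distinct (xs @ [c])" "set (xs @ [c]) \<subseteq> H" using P(4,5) xs by auto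
    ultimately show ?thesis by (intro exI[of _ "xs @ [c]"]) auto
  next
    case False
    have "successively E (P @ [c])" using P bc by (simp add: successively_append_iff)
    moreover have "hd (P @ [c]) = a" using P by simp
    ultimately show ?thesis using P bc False by (intro exI[of _ "P @ [c]"]) auto
  qed
qed

lemma no_insert_path:
  assumes "Hr\<^sup>*\<^sup>* z u" "z \<in> H" "i < m" "E (C ! i) z" "E u (C ! ((i + 1) mod m))"
  shows False
proof -
  obtain P where "P \<noteq> []" "hd P = z" "last P = u" "distinct P" "set P \<subseteq> H" "successively E P"
    using path_of_rtranclp[OF assms(1,2)] by blast
  then show False using no_insert[OF assms(3), of P] assms by auto
qed

lemma card_nth: "card {c \<in> set C. p c} = card {i. i < m \<and> p (C ! i)}"
proof -
  have "{c \<in> set C. p c} = (\<lambda>i. C ! i) ` {i. i < m \<and> p (C ! i)}"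
    by (auto simp: in_set_conv_nth)
  moreover have "inj_on (\<lambda>i. C ! i) {i. i < m \<and> p (C ! i)}"
    using C_facts(2) by (auto simp: inj_on_def nth_eq_iff_index_eq)
  ultimately show ?thesis by (simp add: card_image)
qed

lemma suc_mod: "x < (n::nat) \<Longrightarrow> (x + 1) mod n = (if x + 1 = n then 0 else x + 1)"
  by auto

lemma card_succ: "card {i. i < m \<and> p ((i + 1) mod m)} = card {i. i < m \<and> p i}"
proof -
  have "{i. i < m \<and> p i} = (\<lambda>i. (i + 1) mod m) ` {i. i < m \<and> p ((i + 1) mod m)}"
  proof (intro equalityI subsetI)
    fix j assume j: "j \<in> {i. i < m \<and> p i}"
    then have jm: "j < m" "p j" by auto
    define i where "i = (if j = 0 then m - 1 else j - 1)"
    have im: "i < m" using jm C_facts unfolding i_def by auto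
    have "(i + 1) mod m = j" using suc_mod[OF im] jm C_facts unfolding i_def by auto
    then show "j \<in> (\<lambda>i. (i + 1) mod m) ` {i. i < m \<and> p ((i + 1) mod m)}"
      using im jm by (intro image_eqI[of _ _ i]) auto
  next
    fix j assume "j \<in> (\<lambda>i. (i + 1) mod m) ` {i. i < m \<and> p ((i + 1) mod m)}"
    then obtain i where "i < m" "p ((i + 1) mod m)" "j = (i + 1) mod m" by auto
    moreover have "(i + 1) mod m < m" using C_facts(4) by (intro mod_less_divisor)
    ultimately show "j \<in> {i. i < m \<and> p i}" by auto
  qed
  moreover have "inj_on (\<lambda>i. (i + 1) mod m) {i. i < m \<and> p ((i + 1) mod m)}"
  proof (rule inj_onI)
    fix x y assume x: "x \<in> {i. i < m \<and> p ((i + 1) mod m)}" and y: "y \<in> {i. i < m \<and> p ((i + 1) mod m)}"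
      and eq: "(x + 1) mod m = (y + 1) mod m"
    have "x < m" "y < m" using x y by auto
    then show "x = y" using eq suc_mod[of x m] suc_mod[of y m] by (auto split: if_splits)
  qed
  ultimately show ?thesis by (simp add: card_image)
qed

lemma card_out: "card {c \<in> set C. p c} = card {i. i < m \<and> p (C ! ((i + 1) mod m))}"
  using card_nth[of p] card_succ[of "\<lambda>j. p (C ! j)"] by simp

lemma cnt:
  assumes "Hr\<^sup>*\<^sup>* z u" "z \<in> H"
  shows "card {c \<in> set C. E c z} + card {c \<in> set C. E u c} \<le> m"
proof -
  let ?A = "{i. i < m \<and> E (C ! i) z}" and ?B = "{i. i < m \<and> E u (C ! ((i + 1) mod m))}"
  have "?A \<inter> ?B = {}" using no_insert_path[OF assms] by blast
  moreover have "?A \<union> ?B \<subseteq> {..<m}" by auto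
  moreover have fA: "finite ?A" and fB: "finite ?B" by auto
  ultimately have "card ?A + card ?B = card (?A \<union> ?B)" by (simp add: card_Un_disjoint)
  also have "\<dots> \<le> card {..<m}" using \<open>?A \<union> ?B \<subseteq> {..<m}\<close> by (intro card_mono) auto
  finally have "card ?A + card ?B \<le> m" by simp
  then show ?thesis using card_nth[of "\<lambda>c. E c z"] card_out[of "E u"] by simp
qed

end


context lsetup begin

lemma finH: "finite H" using finV by simp

lemma indeg_bound:
  assumes Zs: "Z \<subseteq> H" and Zc: "\<forall>a b. Hr a b \<longrightarrow> b \<in> Z \<longrightarrow> a \<in> Z" and z: "z \<in> Z"
  shows "indeg V E z \<le> card {c \<in> set C. E c z} + (card Z - 1)"
proof -
  have fZ: "finite Z" using finite_subset[OF Zs finH] .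
  have "{w \<in> V. E w z} \<subseteq> {c \<in> set C. E c z} \<union> (Z - {z})"
  proof
    fix w assume w: "w \<in> {w \<in> V. E w z}"
    show "w \<in> {c \<in> set C. E c z} \<union> (Z - {z})"
    proof (cases "w \<in> set C")
      case True then show ?thesis using w by auto
    next
      case False
      then have "Hr w z" using w z Zs unfolding Hr_def by auto
      then have "w \<in> Z" using Zc z by blast
      moreover have "w \<noteq> z" using w noloop by auto
      ultimately show ?thesis by auto
    qed
  qed
  then have "indeg V E z \<le> card ({c \<in> set C. E c z} \<union> (Z - {z}))"
    unfolding indeg_def using fZ by (intro card_mono) auto
  also have "\<dots> \<le> card {c \<in> set C. E c z} + card (Z - {z})" by (rule card_Un_le)
  also have "card (Z - {z}) = card Z - 1" using fZ z by simp
  finally show ?thesis .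
qed

lemma outdeg_bound:
  assumes Xs: "X \<subseteq> H" and Xc: "\<forall>a b. Hr a b \<longrightarrow> a \<in> X \<longrightarrow> b \<in> X" and u: "u \<in> X"
  shows "outdeg V E u \<le> card {c \<in> set C. E u c} + (card X - 1)"
proof -
  have fX: "finite X" using finite_subset[OF Xs finH] .
  have "{w \<in> V. E u w} \<subseteq> {c \<in> set C. E u c} \<union> (X - {u})"
  proof
    fix w assume w: "w \<in> {w \<in> V. E u w}"
    show "w \<in> {c \<in> set C. E u c} \<union> (X - {u})"
    proof (cases "w \<in> set C")
      case True then show ?thesis using w by auto
    next
      case False
      then have "Hr u w" using w u Xs unfolding Hr_def by auto
      then have "w \<in> X" using Xc u by blast
      moreover have "w \<noteq> u" using w noloop by auto
      ultimately show ?thesis by auto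
    qed
  qed
  then have "outdeg V E u \<le> card ({c \<in> set C. E u c} \<union> (X - {u}))"
    unfolding outdeg_def using fX by (intro card_mono) auto
  also have "\<dots> \<le> card {c \<in> set C. E u c} + card (X - {u})" by (rule card_Un_le)
  also have "card (X - {u}) = card X - 1" using fX u by simp
  finally show ?thesis .
qed

lemma SC:
  assumes d: "\<forall>w\<in>V. d \<le> indeg V E w \<and> d \<le> outdeg V E w"
    and Zs: "Z \<subseteq> H" and Zc: "\<forall>a b. Hr a b \<longrightarrow> b \<in> Z \<longrightarrow> a \<in> Z" and z: "z \<in> Z"
    and Xs: "X \<subseteq> H" and Xc: "\<forall>a b. Hr a b \<longrightarrow> a \<in> X \<longrightarrow> b \<in> X" and u: "u \<in> X"
    and p: "Hr\<^sup>*\<^sup>* z u"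
  shows "2 * d + 2 \<le> m + card Z + card X"
proof -
  have zH: "z \<in> H" "u \<in> H" using z u Zs Xs by auto
  have 1: "d \<le> card {c \<in> set C. E c z} + (card Z - 1)"
    using indeg_bound[OF Zs Zc z] d zH by force
  have 2: "d \<le> card {c \<in> set C. E u c} + (card X - 1)"
    using outdeg_bound[OF Xs Xc u] d zH by force
  have 3: "card {c \<in> set C. E c z} + card {c \<in> set C. E u c} \<le> m" using cnt[OF p zH(1)] .
  have "card Z > 0" using z finite_subset[OF Zs finH] card_gt_0_iff by blast
  moreover have "card X > 0" using u finite_subset[OF Xs finH] card_gt_0_iff by blast
  ultimately show ?thesis using 1 2 3 by linarith
qed

lemma card_disj: "X \<subseteq> H \<Longrightarrow> Y \<subseteq> H \<Longrightarrow> X \<inter> Y = {} \<Longrightarrow> card X + card Y \<le> card H"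
proof -
  assume a: "X \<subseteq> H" "Y \<subseteq> H" "X \<inter> Y = {}"
  have f: "finite X" "finite Y" using a finH finite_subset by blast+
  have "card X + card Y = card (X \<union> Y)" using f a by (simp add: card_Un_disjoint)
  also have "\<dots> \<le> card H" using a finH by (intro card_mono) auto
  finally show ?thesis .
qed

definition "Rs w = {u \<in> H. Hr\<^sup>*\<^sup>* w u}"
definition "Qs w = {u \<in> H. Hr\<^sup>*\<^sup>* u w}"

lemma Rs_props: "Rs w \<subseteq> H" "\<forall>a b. Hr a b \<longrightarrow> a \<in> Rs w \<longrightarrow> b \<in> Rs w" "w \<in> H \<Longrightarrow> w \<in> Rs w"
proof -
  show "Rs w \<subseteq> H" unfolding Rs_def by blast
  show "\<forall>a b. Hr a b \<longrightarrow> a \<in> Rs w \<longrightarrow> b \<in> Rs w"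
  proof (intro allI impI)
    fix a b assume h: "Hr a b" "a \<in> Rs w"
    then have "Hr\<^sup>*\<^sup>* w b" unfolding Rs_def using rtranclp.rtrancl_into_rtrancl[of Hr w a b] by blast
    moreover have "b \<in> H" using h(1) unfolding Hr_def by blast
    ultimately show "b \<in> Rs w" unfolding Rs_def by blast
  qed
  show "w \<in> H \<Longrightarrow> w \<in> Rs w" unfolding Rs_def by blast
qed

lemma Qs_props: "Qs w \<subseteq> H" "\<forall>a b. Hr a b \<longrightarrow> b \<in> Qs w \<longrightarrow> a \<in> Qs w" "w \<in> H \<Longrightarrow> w \<in> Qs w"
proof -
  show "Qs w \<subseteq> H" unfolding Qs_def by blast
  show "\<forall>a b. Hr a b \<longrightarrow> b \<in> Qs w \<longrightarrow> a \<in> Qs w"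
  proof (intro allI impI)
    fix a b assume h: "Hr a b" "b \<in> Qs w"
    then have "Hr\<^sup>*\<^sup>* a w" unfolding Qs_def using converse_rtranclp_into_rtranclp[of Hr a b w] by blast
    moreover have "a \<in> H" using h(1) unfolding Hr_def by blast
    ultimately show "a \<in> Qs w" unfolding Qs_def by blast
  qed
  show "w \<in> H \<Longrightarrow> w \<in> Qs w" unfolding Qs_def by blast
qed

lemma strong:
  assumes d: "\<forall>w\<in>V. d \<le> indeg V E w \<and> d \<le> outdeg V E w"
    and big: "m + card H + k \<le> 2 * d + 2" and k: "k \<ge> 1"
    and a: "a \<in> H" and b: "b \<in> H"
  shows "Hr\<^sup>*\<^sup>* a b"
proof (rule ccontr)
  assume nab: "\<not> Hr\<^sup>*\<^sup>* a b"
  have sa: "2 * d + 2 \<le> m + card (Qs a) + card (Rs a)"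
    by (rule SC[OF d Qs_props(1,2) Qs_props(3)[OF a] Rs_props(1,2) Rs_props(3)[OF a] rtranclp.rtrancl_refl])
  have sb: "2 * d + 2 \<le> m + card (Qs b) + card (Rs b)"
    by (rule SC[OF d Qs_props(1,2) Qs_props(3)[OF b] Rs_props(1,2) Rs_props(3)[OF b] rtranclp.rtrancl_refl])
  have "Rs a \<inter> Qs b = {}"
  proof (rule ccontr)
    assume "Rs a \<inter> Qs b \<noteq> {}"
    then obtain u where "Hr\<^sup>*\<^sup>* a u" "Hr\<^sup>*\<^sup>* u b" unfolding Rs_def Qs_def by blast
    then have "Hr\<^sup>*\<^sup>* a b" by (rule rtranclp_trans)
    then show False using nab by blast
  qed
  then have d1: "card (Rs a) + card (Qs b) \<le> card H"
    by (rule card_disj[OF Rs_props(1) Qs_props(1)])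
  show False
  proof (cases "Hr\<^sup>*\<^sup>* b a")
    case True
    have "2 * d + 2 \<le> m + card (Qs b) + card (Rs a)"
      by (rule SC[OF d Qs_props(1,2) Qs_props(3)[OF b] Rs_props(1,2) Rs_props(3)[OF a] True])
    then show False using d1 big k by linarith
  next
    case False
    have "Qs a \<inter> Rs b = {}"
    proof (rule ccontr)
      assume "Qs a \<inter> Rs b \<noteq> {}"
      then obtain u where "Hr\<^sup>*\<^sup>* u a" "Hr\<^sup>*\<^sup>* b u" unfolding Rs_def Qs_def by blast
      then have "Hr\<^sup>*\<^sup>* b a" by (rule rtranclp_trans[rotated])
      then show False using False by blast
    qed
    then have "card (Qs a) + card (Rs b) \<le> card H"
      by (rule card_disj[OF Qs_props(1) Rs_props(1)])
    then show False using d1 sa sb big k by linarith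
  qed
qed

end


context lsetup begin

lemma deg_split_in: "indeg V E v = card {c \<in> set C. E c v} + card {u \<in> H. E u v}"
proof -
  have "{w \<in> V. E w v} = {c \<in> set C. E c v} \<union> {u \<in> H. E u v}" using C_facts(3) by auto
  moreover have "finite {c \<in> set C. E c v}" "finite {u \<in> H. E u v}" using finH by auto
  ultimately show ?thesis unfolding indeg_def by (simp add: card_Un_disjoint disjoint_iff)
qed

lemma deg_split_out: "outdeg V E v = card {c \<in> set C. E v c} + card {u \<in> H. E v u}"
proof -
  have "{w \<in> V. E v w} = {c \<in> set C. E v c} \<union> {u \<in> H. E v u}" using C_facts(3) by auto
  moreover have "finite {c \<in> set C. E v c}" "finite {u \<in> H. E v u}" using finH by auto
  ultimately show ?thesis unfolding outdeg_def by (simp add: card_Un_disjoint disjoint_iff)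
qed

lemma main:
  assumes d: "\<forall>w\<in>V. d \<le> indeg V E w \<and> d \<le> outdeg V E w"
    and big: "m + card H + k \<le> 2 * d + 2" and k: "k \<ge> 3"
    and v: "v \<in> H"
    and vdeg: "card {u \<in> H. E u v} + card {u \<in> H. E v u} \<le> card H + k - 1"
    and T: "x1 \<in> {x \<in> set C. \<exists>h \<in> H. E x h}" "x2 \<in> {x \<in> set C. \<exists>h \<in> H. E x h}"
    and F: "y1 \<in> {y \<in> set C. \<exists>h \<in> H. E h y}" "y2 \<in> {y \<in> set C. \<exists>h \<in> H. E h y}"
    and dist: "x1 \<noteq> x2" "y1 \<noteq> y2"
  shows "(E x1 v \<and> E v y1) \<or> (E x2 v \<and> E v y2)"
proof -
  have st: "\<And>a b. a \<in> H \<Longrightarrow> b \<in> H \<Longrightarrow> Hr\<^sup>*\<^sup>* a b"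
    using strong[OF d big] k by simp
  define G where "G = {i. i < m \<and> \<not> E (C ! i) v \<and> \<not> E v (C ! ((i + 1) mod m))}"
  define I1 where "I1 = {i. i < m \<and> E (C ! i) v}"
  define I2 where "I2 = {i. i < m \<and> E v (C ! ((i + 1) mod m))}"
  have fin: "finite G" "finite I1" "finite I2" unfolding G_def I1_def I2_def by auto
  have "I1 \<inter> I2 = {}"
    unfolding I1_def I2_def using no_insert_path[OF rtranclp.rtrancl_refl v] by blast
  moreover have "(I1 \<union> I2) \<inter> G = {}" unfolding I1_def I2_def G_def by blast
  moreover have "I1 \<union> I2 \<union> G \<subseteq> {..<m}" unfolding I1_def I2_def G_def by auto
  ultimately have "card I1 + card I2 + card G \<le> m"
  proof -
    assume a: "I1 \<inter> I2 = {}" "(I1 \<union> I2) \<inter> G = {}" "I1 \<union> I2 \<union> G \<subseteq> {..<m}"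
    have "card I1 + card I2 + card G = card (I1 \<union> I2 \<union> G)"
      using a fin by (simp add: card_Un_disjoint)
    also have "\<dots> \<le> card {..<m}" using a by (intro card_mono) auto
    finally show ?thesis by simp
  qed
  moreover have "card I1 = card {c \<in> set C. E c v}" unfolding I1_def by (rule card_nth[symmetric])
  moreover have "card I2 = card {c \<in> set C. E v c}" unfolding I2_def by (rule card_out[symmetric])
  moreover have "d \<le> indeg V E v" "d \<le> outdeg V E v" using d v by auto
  ultimately have cG: "card G \<le> 1"
    using deg_split_in[of v] deg_split_out[of v] vdeg big k by linarith
  have Guniq: "i = j" if "i \<in> G" "j \<in> G" for i j
    using cG fin(1) that by (metis card_le_Suc0_iff_eq One_nat_def)
  have cx: "\<exists>i\<in>G. C ! i = x" if x: "x \<in> {x \<in> set C. \<exists>h \<in> H. E x h}" and nx: "\<not> E x v" for x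
  proof -
    obtain i where i: "i < m" "C ! i = x" using x by (auto simp: in_set_conv_nth)
    obtain h where h: "h \<in> H" "E x h" using x by auto
    have "\<not> E v (C ! ((i + 1) mod m))"
    proof
      assume "E v (C ! ((i + 1) mod m))"
      then show False using no_insert_path[OF st[OF h(1) v] h(1) i(1)] h i by simp
    qed
    then have "i \<in> G" unfolding G_def using i nx by simp
    then show ?thesis using i by blast
  qed
  have cy: "\<exists>i\<in>G. C ! ((i + 1) mod m) = y" if y: "y \<in> {y \<in> set C. \<exists>h \<in> H. E h y}" and ny: "\<not> E v y" for y
  proof -
    obtain j where j: "j < m" "C ! j = y" using y by (auto simp: in_set_conv_nth)
    define i where "i = (if j = 0 then m - 1 else j - 1)"
    have im: "i < m" using j C_facts unfolding i_def by auto
    have ij: "(i + 1) mod m = j" using suc_mod[OF im] j C_facts unfolding i_def by auto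
    obtain h where h: "h \<in> H" "E h y" using y by auto
    have "\<not> E (C ! i) v"
    proof
      assume "E (C ! i) v"
      then show False using no_insert_path[OF st[OF v h(1)] v im] h j ij by simp
    qed
    then have "i \<in> G" unfolding G_def using im ny ij j by simp
    then show ?thesis using ij j by blast
  qed
  have cxy: False if iG: "i \<in> G" and xT: "C ! i \<in> {x \<in> set C. \<exists>h \<in> H. E x h}"
      and yF: "C ! ((i + 1) mod m) \<in> {y \<in> set C. \<exists>h \<in> H. E h y}" for i
  proof -
    obtain h where h: "h \<in> H" "E (C ! i) h" using xT by blast
    obtain h' where h': "h' \<in> H" "E h' (C ! ((i + 1) mod m))" using yF by blast
    have "i < m" using iG unfolding G_def by simp
    then show False using no_insert_path[OF st[OF h(1) h'(1)] h(1)] h h' by simp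
  qed
  show ?thesis
  proof (rule ccontr)
    assume "\<not> ?thesis"
    then have c1: "\<not> E x1 v \<or> \<not> E v y1" and c2: "\<not> E x2 v \<or> \<not> E v y2" by auto
    show False
    proof (cases "E x1 v")
      case False
      then obtain i1 where i1: "i1 \<in> G" "C ! i1 = x1" using cx[OF T(1)] by blast
      show False
      proof (cases "E x2 v")
        case False
        then obtain i2 where i2: "i2 \<in> G" "C ! i2 = x2" using cx[OF T(2)] by blast
        then show False using Guniq[OF i1(1) i2(1)] i1 dist by simp
      next
        case True
        then have "\<not> E v y2" using c2 by simp
        then obtain j where j: "j \<in> G" "C ! ((j + 1) mod m) = y2" using cy[OF F(2)] by blast
        then show False using Guniq[OF i1(1) j(1)] i1 cxy[of j] T F by simp
      qed
    next
      case True
      then have ny1: "\<not> E v y1" using c1 by simp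
      then obtain j1 where j1: "j1 \<in> G" "C ! ((j1 + 1) mod m) = y1" using cy[OF F(1)] by blast
      show False
      proof (cases "E x2 v")
        case False
        then obtain i2 where i2: "i2 \<in> G" "C ! i2 = x2" using cx[OF T(2)] by blast
        then show False using Guniq[OF i2(1) j1(1)] j1 cxy[of j1] T F by simp
      next
        case True
        then have "\<not> E v y2" using c2 by simp
        then obtain j2 where j2: "j2 \<in> G" "C ! ((j2 + 1) mod m) = y2" using cy[OF F(2)] by blast
        then show False using Guniq[OF j1(1) j2(1)] j1 dist by simp
      qed
    qed
  qed
qed

end



theorem lemma10:
  fixes V :: "'a set" and E :: "'a \<Rightarrow> 'a \<Rightarrow> bool" and S C :: "'a list"
    and k :: nat and v x1 x2 y1 y2 :: 'a
  assumes D: "digraph V E"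
    and k: "k \<ge> 3"
    and deg: "int (min_semideg V E) \<ge> \<lceil>(real (card V) + real k) / 2\<rceil> - 1"
    and S: "length S = k" "distinct S" "set S \<subseteq> V"
    and C: "S_cycle V E S C"
    and longest: "\<forall>C'. S_cycle V E S C' \<longrightarrow> length C' \<le> length C"
    and nonham: "set C \<noteq> V"
    and v: "v \<in> V - set C"
    and vdeg: "card {u \<in> V - set C. E u v} + card {u \<in> V - set C. E v u}
                 \<le> card (V - set C) + k - 1"
    and T: "x1 \<in> {x \<in> set C. \<exists>h \<in> V - set C. E x h}"
           "x2 \<in> {x \<in> set C. \<exists>h \<in> V - set C. E x h}"
    and F: "y1 \<in> {y \<in> set C. \<exists>h \<in> V - set C. E h y}"
           "y2 \<in> {y \<in> set C. \<exists>h \<in> V - set C. E h y}"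
    and dist: "distinct [x1, x2, y1, y2]"
  shows "(E x1 v \<and> E v y1) \<or> (E x2 v \<and> E v y2)"
proof -
  obtain r where cyc: "dcycle V E C" and sub: "subseq S (rotate r C)"
    using C unfolding S_cycle_def by blast
  let ?D = "rotate r C"
  have cycD: "dcycle V E ?D" by (rule dcycle_rotate[OF cyc])
  have sD: "set ?D = set C" and lD: "length ?D = length C" by simp_all
  interpret L: lsetup V E S ?D
    by unfold_locales (use D cycD sub longest lD in auto)
  define d where "d = min_semideg V E"
  have finV: "finite V" using D unfolding digraph_def by auto
  have dd: "\<forall>w\<in>V. d \<le> indeg V E w \<and> d \<le> outdeg V E w"
  proof
    fix w assume w: "w \<in> V"
    have "d \<le> min (outdeg V E w) (indeg V E w)"
      unfolding d_def min_semideg_def using finV w by (intro Min_le) auto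
    then show "d \<le> indeg V E w \<and> d \<le> outdeg V E w" by simp
  qed
  have cardV: "card V = length C + card (V - set C)"
  proof -
    have "set C \<subseteq> V" "distinct C" using cyc unfolding dcycle_def by auto
    then have "card (V - set C) = card V - length C" using finV by (simp add: card_Diff_subset distinct_card)
    moreover have "length C \<le> card V" using card_mono[OF finV \<open>set C \<subseteq> V\<close>] \<open>distinct C\<close>
      by (simp add: distinct_card)
    ultimately show ?thesis by simp
  qed
  have "real (card V) + real k \<le> 2 * real d + 2"
  proof -
    have "(real (card V) + real k) / 2 \<le> of_int \<lceil>(real (card V) + real k) / 2\<rceil>"
      by (rule le_of_int_ceiling)
    also have "\<dots> \<le> of_int (int d + 1)" using deg unfolding d_def by simp
    finally show ?thesis by simp
  qed
  then have big: "length ?D + card (V - set ?D) + k \<le> 2 * d + 2"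
    using cardV lD sD by simp
  have vH: "v \<in> V - set ?D" using v sD by simp
  show ?thesis
    using L.main[OF dd big k vH] vdeg T F dist sD lD by simp
qed


end
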